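(* Let $\mathbb F x$ be a one-dimensional vector space and $S(Lev,\mathbb F x)=\bigoplus_{n\ge1}(Lev(n)\otimes(\mathbb F x)^{\otimes n})_{\Sigma_n}$ the free level algebra on one generator. The linear map $S(Lev,\mathbb F x)\to\mathbb F[\mathrm{BHS}]$ sending the class of $I\otimes x^{\otimes n}$ ($I\in\mathscr L(n)$) to $(|I_0|,|I_1|,\dots)$ is an isomorphism of vector spaces, and it is an isomorphism of level algebras when $\mathbb F[\mathrm{BHS}]$ is given the bilinear extension of the product $(u,v)\mapsto u\cdot v$.
   Context: $[n]=\{1,\dots,n\}$. $\mathscr L(n)$: families $I=(I_i)_{i\ge0}$ of disjoint subsets of $[n]$ with union $[n]$ and $\sum_i|I_i|/2^i=1$, with $\Sigma_n$ acting by $\sigma\cdot I=(\sigma(I_i))_i$. Equivalently $I$ is the map $h:[n]\to\mathbb N$ with $h(x)=j$ iff $x\in I_j$. These form a set operad with unit $1\mapsto0$ and full composition $\mu(h\otimes g_1\otimes\dots\otimes g_n)$ sending $m_1+\dots+m_{j-1}+t$ ($1\le t\le m_j$) to $h(j)+g_j(t)$; $Lev=\mathbb F[\mathscr L]$ is the linear operad it spans, whose algebras are level algebras (vector spaces with a commutative bilinear product $*$ with $(a*b)*(c*d)=(a*c)*(b*d)$). The level product on the free algebra $S(Lev,\mathbb F x)$ is $a*b=\mu(h_2\otimes a\otimes b)$ with $h_2:[2]\to\mathbb N$ constant equal to $1$. $\mathrm{BHS}=\bigsqcup_{n\ge1}\mathrm{BHS}(n)$, $\mathrm{BHS}(n)=\{u\in\mathbb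 N^{\mathbb N}:\sum_iu(i)=n,\ \sum_iu(i)/2^i=1\}$; for $u,v\in\mathrm{BHS}$, $u\cdot v=(0,u(0)+v(0),u(1)+v(1),\dots)$. *)

theory Defs
  imports Complex_Main "HOL-Combinatorics.Permutations"
begin

text \<open>An element I of L(n) is encoded as the pair (n, h) with h : [n] -> N the
  level map (h x = j iff x in I_j), normalised by h x = 0 outside [n] = {1..n}.\<close>

definition level_fun :: "nat \<Rightarrow> (nat \<Rightarrow> nat) \<Rightarrow> bool" where
  "level_fun n h \<longleftrightarrow> (\<forall>x. x \<notin> {1..n} \<longrightarrow> h x = 0)
     \<and> (\<Sum>x\<in>{1..n}. (1/2::real) ^ h x) = 1"

definition LL :: "(nat \<times> (nat \<Rightarrow> nat)) set" where
  "LL = {(n, h). level_fun n h}"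

text \<open>Sigma_n action: sigma . I = (sigma(I_i))_i, i.e. h |-> h o sigma^{-1}.\<close>
definition perm_act :: "(nat \<Rightarrow> nat) \<Rightarrow> (nat \<Rightarrow> nat) \<Rightarrow> (nat \<Rightarrow> nat)" where
  "perm_act \<sigma> h = h \<circ> inv \<sigma>"

text \<open>Full operad composition mu(h (x) g_1 (x) ... (x) g_k); the g_j are given with
  their arities. comp_aux k h gs: the first element of gs is plugged into input k of h.\<close>
fun comp_aux :: "nat \<Rightarrow> (nat \<Rightarrow> nat) \<Rightarrow> (nat \<times> (nat \<Rightarrow> nat)) list \<Rightarrow> nat \<Rightarrow> nat" where
  "comp_aux k h [] x = 0"
| "comp_aux k h ((m, g) # gs) x =
     (if 1 \<le> x \<and> x \<le> m then h k + g x else comp_aux (Suc k) h gs (x - m))"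

definition op_comp :: "(nat \<times> (nat \<Rightarrow> nat)) \<Rightarrow> (nat \<times> (nat \<Rightarrow> nat)) list
    \<Rightarrow> (nat \<times> (nat \<Rightarrow> nat))" where
  "op_comp hh gs = (sum_list (map fst gs), comp_aux 1 (snd hh) gs)"

definition h2 :: "nat \<times> (nat \<Rightarrow> nat)" where
  "h2 = (2, \<lambda>x. if x \<in> {1, 2} then 1 else 0)"

definition level_mul :: "nat \<times> (nat \<Rightarrow> nat) \<Rightarrow> nat \<times> (nat \<Rightarrow> nat) \<Rightarrow> nat \<times> (nat \<Rightarrow> nat)" where
  "level_mul a b = op_comp h2 [a, b]"

definition bhs :: "nat \<Rightarrow> (nat \<Rightarrow> nat) \<Rightarrow> bool" where
  "bhs n u \<longleftrightarrow> finite {i. u i \<noteq> 0} \<and> (\<Sum>i\<in>{i. u i \<noteq> 0}. u i) = n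
     \<and> (\<Sum>i\<in>{i. u i \<noteq> 0}. real (u i) / 2 ^ i) = 1"

definition BHS :: "(nat \<Rightarrow> nat) set" where
  "BHS = {u. \<exists>n\<ge>1. bhs n u}"

definition bhs_mul :: "(nat \<Rightarrow> nat) \<Rightarrow> (nat \<Rightarrow> nat) \<Rightarrow> (nat \<Rightarrow> nat)" where
  "bhs_mul u v = (\<lambda>i. if i = 0 then 0 else u (i - 1) + v (i - 1))"

definition bhs_of :: "nat \<times> (nat \<Rightarrow> nat) \<Rightarrow> (nat \<Rightarrow> nat)" where
  "bhs_of p = (\<lambda>i. card {x \<in> {1..fst p}. snd p x = i})"

text \<open>Free vector space F[X]: finitely supported functions X -> F.\<close>
definition supp :: "('x \<Rightarrow> 'a::zero) \<Rightarrow> 'x set" where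
  "supp c = {x. c x \<noteq> 0}"

definition fin_supp_in :: "'x set \<Rightarrow> ('x \<Rightarrow> 'a::zero) \<Rightarrow> bool" where
  "fin_supp_in X c \<longleftrightarrow> finite (supp c) \<and> supp c \<subseteq> X"

definition delta :: "'x \<Rightarrow> 'x \<Rightarrow> 'a::{zero,one}" where
  "delta q p = (if p = q then 1 else 0)"

definition push :: "('x \<Rightarrow> 'y) \<Rightarrow> ('x \<Rightarrow> 'a::comm_monoid_add) \<Rightarrow> 'y \<Rightarrow> 'a" where
  "push f c y = (\<Sum>q\<in>supp c. if f q = y then c q else 0)"

definition fconv :: "('x \<Rightarrow> 'x \<Rightarrow> 'x) \<Rightarrow> ('x \<Rightarrow> 'a::comm_semiring_1) \<Rightarrow> ('x \<Rightarrow> 'a) \<Rightarrow> 'x \<Rightarrow> 'a" where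
  "fconv mul c d z = (\<Sum>(q, r)\<in>supp c \<times> supp d. if mul q r = z then c q * d r else 0)"

text \<open>The subspace of F[L(n)] (x) x^n, summed over n, spanned by sigma.(I (x) x^n) - I (x) x^n
  (permuting the tensor factors of x^n is trivial); the coinvariants are the quotient by it.\<close>
inductive_set coinv_span :: "(nat \<times> (nat \<Rightarrow> nat) \<Rightarrow> 'a::field) set" where
  zero: "(\<lambda>_. 0) \<in> coinv_span"
| step: "c \<in> coinv_span \<Longrightarrow> level_fun n h \<Longrightarrow> \<sigma> permutes {1..n} \<Longrightarrow>
    (\<lambda>p. c p + a * (delta (n, perm_act \<sigma> h) p - delta (n, h) p)) \<in> coinv_span"

end

theory Submission
  imports Defs
begin


lemma push_superset:
  assumes "finite A" "supp c \<subseteq> A"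
  shows "push f c y = (\<Sum>q\<in>A. if f q = y then c q else 0)"
  unfolding push_def
  by (rule sum.mono_neutral_left) (use assms in \<open>auto simp: supp_def\<close>)

lemma fconv_superset:
  assumes "finite A" "finite B" "supp c \<subseteq> A" "supp d \<subseteq> B"
  shows "fconv mul c d z = (\<Sum>(q,r)\<in>A \<times> B. if mul q r = z then c q * d r else 0)"
  unfolding fconv_def
  by (rule sum.mono_neutral_left) (use assms in \<open>auto simp: supp_def split: if_splits\<close>)

lemma supp_push: "supp (push f c) \<subseteq> f ` supp c"
proof
  fix y assume "y \<in> supp (push f c)"
  then have "push f c y \<noteq> 0" by (simp add: supp_def)
  from sum.not_neutral_contains_not_neutral[OF this[unfolded push_def]]
  obtain q where "q \<in> supp c" "(if f q = y then c q else 0) \<noteq> 0" by blast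
  then have "q \<in> supp c" "f q = y" by (auto split: if_splits)
  then show "y \<in> f ` supp c" by blast
qed

lemma supp_fconv: "supp (fconv mul c d) \<subseteq> (\<lambda>(q,r). mul q r) ` (supp c \<times> supp d)"
proof
  fix z assume "z \<in> supp (fconv mul c d)"
  then have "fconv mul c d z \<noteq> 0" by (simp add: supp_def)
  from sum.not_neutral_contains_not_neutral[OF this[unfolded fconv_def]]
  obtain qr where "qr \<in> supp c \<times> supp d" "(case qr of (q,r) \<Rightarrow> if mul q r = z then c q * d r else 0) \<noteq> 0"
    by blast
  then obtain q r where "(q,r) \<in> supp c \<times> supp d" "mul q r = z" by (auto split: if_splits)
  then show "z \<in> (\<lambda>(q,r). mul q r) ` (supp c \<times> supp d)" by force
qed

lemma push_fconv:
  fixes c d :: "'x \<Rightarrow> 'a::comm_semiring_1"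
  assumes fc: "finite (supp c)" and fd: "finite (supp d)"
    and hom: "\<And>q r. q \<in> supp c \<Longrightarrow> r \<in> supp d \<Longrightarrow> f (mul q r) = mul' (f q) (f r)"
  shows "push f (fconv mul c d) = fconv mul' (push f c) (push f d)"
proof
  fix z
  let ?S = "supp c \<times> supp d"
  let ?M = "(\<lambda>(q,r). mul q r) ` ?S"
  have fS: "finite ?S" using fc fd by simp
  have fM: "finite ?M" using fS by simp
  have "push f (fconv mul c d) z = (\<Sum>w\<in>?M. if f w = z then fconv mul c d w else 0)"
    by (rule push_superset[OF finite_imageI[OF fS] supp_fconv])
  also have "\<dots> = (\<Sum>w\<in>?M. \<Sum>(q,r)\<in>?S. if f w = z \<and> mul q r = w then c q * d r else 0)"
  proof (rule sum.cong[OF refl])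
    fix w
    show "(if f w = z then fconv mul c d w else 0) =
      (\<Sum>(q,r)\<in>?S. if f w = z \<and> mul q r = w then c q * d r else 0)"
      unfolding fconv_def by (cases "f w = z") simp_all
  qed
  also have "\<dots> = (\<Sum>(q,r)\<in>?S. \<Sum>w\<in>?M. if f w = z \<and> mul q r = w then c q * d r else 0)"
    unfolding case_prod_beta by (rule sum.swap)
  also have "\<dots> = (\<Sum>(q,r)\<in>?S. if f (mul q r) = z then c q * d r else 0)"
  proof (rule sum.cong[OF refl], clarify)
    fix q r assume qr: "q \<in> supp c" "r \<in> supp d"
    have "(\<Sum>w\<in>?M. if f w = z \<and> mul q r = w then c q * d r else 0)
        = (\<Sum>w\<in>?M. if w = mul q r then (if f (mul q r) = z then c q * d r else 0) else 0)"
      by (rule sum.cong[OF refl]) auto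
    also have "\<dots> = (if mul q r \<in> ?M then (if f (mul q r) = z then c q * d r else 0) else 0)"
      by (rule sum.delta[OF fM])
    also have "\<dots> = (if f (mul q r) = z then c q * d r else 0)"
      using qr by (simp add: image_iff) (metis SigmaI case_prod_conv)
    finally show "(\<Sum>w\<in>?M. if f w = z \<and> mul q r = w then c q * d r else 0)
        = (if f (mul q r) = z then c q * d r else 0)" .
  qed
  also have "\<dots> = (\<Sum>(q,r)\<in>?S. if mul' (f q) (f r) = z then c q * d r else 0)"
    by (rule sum.cong[OF refl]) (auto simp: hom)
  finally have L: "push f (fconv mul c d) z = \<dots>" .
  let ?U = "f ` supp c" and ?V = "f ` supp d"
  have fUV: "finite (?U \<times> ?V)" using fc fd by simp
  have "fconv mul' (push f c) (push f d) z
      = (\<Sum>(u,v)\<in>?U \<times> ?V. if mul' u v = z then push f c u * push f d v else 0)"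
    by (rule fconv_superset[OF finite_imageI[OF fc] finite_imageI[OF fd] supp_push supp_push])
  also have "\<dots> = (\<Sum>(u,v)\<in>?U \<times> ?V. \<Sum>(q,r)\<in>?S.
       if mul' u v = z \<and> f q = u \<and> f r = v then c q * d r else 0)"
  proof (rule sum.cong[OF refl], clarify)
    fix u v
    have "push f c u * push f d v = (\<Sum>q\<in>supp c. \<Sum>r\<in>supp d. (if f q = u then c q else 0) * (if f r = v then d r else 0))"
      unfolding push_def by (rule sum_product)
    also have "\<dots> = (\<Sum>(q,r)\<in>?S. if f q = u \<and> f r = v then c q * d r else 0)"
      unfolding sum.cartesian_product by (rule sum.cong[OF refl]) auto
    finally have e: "push f c u * push f d v = (\<Sum>(q,r)\<in>?S. if f q = u \<and> f r = v then c q * d r else 0)" .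
    show "(if mul' u v = z then push f c u * push f d v else 0) =
       (\<Sum>(q,r)\<in>?S. if mul' u v = z \<and> f q = u \<and> f r = v then c q * d r else 0)"
      using e by (cases "mul' u v = z") simp_all
  qed
  also have "\<dots> = (\<Sum>(q,r)\<in>?S. \<Sum>(u,v)\<in>?U \<times> ?V.
       if mul' u v = z \<and> f q = u \<and> f r = v then c q * d r else 0)"
    unfolding case_prod_beta by (rule sum.swap)
  also have "\<dots> = (\<Sum>(q,r)\<in>?S. if mul' (f q) (f r) = z then c q * d r else 0)"
  proof (rule sum.cong[OF refl], clarify)
    fix q r assume qr: "q \<in> supp c" "r \<in> supp d"
    have "(\<Sum>(u,v)\<in>?U \<times> ?V. if mul' u v = z \<and> f q = u \<and> f r = v then c q * d r else 0)
       = (\<Sum>uv\<in>?U \<times> ?V. if uv = (f q, f r) then (if mul' (f q) (f r) = z then c q * d r else 0) else 0)"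
      by (rule sum.cong[OF refl]) (auto split: prod.splits)
    also have "\<dots> = (if (f q, f r) \<in> ?U \<times> ?V then (if mul' (f q) (f r) = z then c q * d r else 0) else 0)"
      by (rule sum.delta[OF fUV])
    also have "\<dots> = (if mul' (f q) (f r) = z then c q * d r else 0)"
      using qr by simp
    finally show "(\<Sum>(u,v)\<in>?U \<times> ?V. if mul' u v = z \<and> f q = u \<and> f r = v then c q * d r else 0)
       = (if mul' (f q) (f r) = z then c q * d r else 0)" .
  qed
  finally have R: "fconv mul' (push f c) (push f d) z = (\<Sum>(q,r)\<in>?S. if mul' (f q) (f r) = z then c q * d r else 0)" .
  show "push f (fconv mul c d) z = fconv mul' (push f c) (push f d) z"
    by (rule trans[OF L R[symmetric]])
qed


lemma push_step:
  fixes c :: "'x \<Rightarrow> 'a::comm_ring_1"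
  assumes fc: "finite (supp c)" and eq: "f p1 = f p2"
  shows "push f (\<lambda>x. c x + a * (delta p1 x - delta p2 x)) = push f c"
    and "finite (supp (\<lambda>x. c x + a * (delta p1 x - delta p2 x)))"
proof -
  let ?A = "supp c \<union> {p1, p2}"
  have fA: "finite ?A" using fc by simp
  have sA: "supp (\<lambda>x. c x + a * (delta p1 x - delta p2 x)) \<subseteq> ?A"
    by (auto simp: supp_def delta_def)
  then show "finite (supp (\<lambda>x. c x + a * (delta p1 x - delta p2 x)))"
    using fA finite_subset by blast
  show "push f (\<lambda>x. c x + a * (delta p1 x - delta p2 x)) = push f c"
  proof
    fix y
    have e: "\<And>x. (if f x = y then c x + a * (delta p1 x - delta p2 x) else 0)
       = (if f x = y then c x else 0) + a * ((if x = p1 then (if f p1 = y then 1 else 0) else 0)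
           - (if x = p2 then (if f p2 = y then 1 else 0) else 0))"
      by (auto simp: delta_def)
    have "push f (\<lambda>x. c x + a * (delta p1 x - delta p2 x)) y
       = (\<Sum>x\<in>?A. if f x = y then c x + a * (delta p1 x - delta p2 x) else 0)"
      by (rule push_superset[OF fA sA])
    also have "\<dots> = (\<Sum>x\<in>?A. if f x = y then c x else 0) + a * ((\<Sum>x\<in>?A. if x = p1 then (if f p1 = y then 1 else 0) else 0)
           - (\<Sum>x\<in>?A. if x = p2 then (if f p2 = y then 1 else 0) else 0))"
      unfolding e sum.distrib sum_distrib_left[symmetric] sum_subtractf ..
    also have "\<dots> = (\<Sum>x\<in>?A. if f x = y then c x else 0)"
      using fA eq by simp
    also have "\<dots> = push f c y"
      by (rule push_superset[symmetric, OF fA]) auto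
    finally show "push f (\<lambda>x. c x + a * (delta p1 x - delta p2 x)) y = push f c y" .
  qed
qed

lemma level_mul_eq:
  "level_mul (n, h) (m, g) = (n + m, \<lambda>x. if 1 \<le> x \<and> x \<le> n then 1 + h x
      else if 1 \<le> x - n \<and> x - n \<le> m then 1 + g (x - n) else 0)"
  by (auto simp: level_mul_def op_comp_def h2_def fun_eq_iff)

lemma bhs_of_level_mul: "bhs_of (level_mul p q) = bhs_mul (bhs_of p) (bhs_of q)"
proof -
  obtain n h m g where pq: "p = (n, h)" "q = (m, g)" by fastforce
  define F where "F = (\<lambda>x. if 1 \<le> x \<and> x \<le> n then 1 + h x
      else if 1 \<le> x - n \<and> x - n \<le> m then 1 + g (x - n) else (0::nat))"
  have lm: "level_mul p q = (n + m, F)" unfolding pq F_def by (rule level_mul_eq)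
  show ?thesis
  proof
    fix i
    show "bhs_of (level_mul p q) i = bhs_mul (bhs_of p) (bhs_of q) i"
    proof (cases i)
      case 0
      have "{x \<in> {1..n+m}. F x = i} = {}" using 0 by (auto simp: F_def)
      then show ?thesis using 0 by (simp add: lm bhs_of_def bhs_mul_def)
    next
      case (Suc j)
      have U: "{x \<in> {1..n+m}. F x = i} = {x \<in> {1..n}. h x = j} \<union> (\<lambda>y. y + n) ` {y \<in> {1..m}. g y = j}"
        (is "?L = ?P \<union> ?Q")
      proof
        show "?L \<subseteq> ?P \<union> ?Q"
        proof
          fix x assume x: "x \<in> ?L"
          show "x \<in> ?P \<union> ?Q"
          proof (cases "x \<le> n")
            case True then show ?thesis using x Suc by (auto simp: F_def)
          next
            case False
            then have "x = (x - n) + n" by simp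
            moreover have "x - n \<in> {y \<in> {1..m}. g y = j}" using x Suc False by (auto simp: F_def split: if_splits)
            ultimately show ?thesis by blast
          qed
        qed
        show "?P \<union> ?Q \<subseteq> ?L" using Suc by (auto simp: F_def)
      qed
      have "card ?L = card ?P + card ?Q"
        unfolding U by (rule card_Un_disjoint) auto
      also have "card ?Q = card {y \<in> {1..m}. g y = j}"
        by (rule card_image) (simp add: inj_on_def)
      finally show ?thesis unfolding bhs_of_def bhs_mul_def lm using Suc by (simp add: pq)
    qed
  qed
qed



lemma fiber_sums:
  fixes h :: "nat \<Rightarrow> nat" and n :: nat
  defines "u \<equiv> bhs_of (n, h)"
  shows "{i. u i \<noteq> 0} = h ` {1..n}"
    and "(\<Sum>i\<in>{i. u i \<noteq> 0}. u i) = n"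
    and "(\<Sum>i\<in>{i. u i \<noteq> 0}. real (u i) / 2 ^ i) = (\<Sum>x\<in>{1..n}. (1/2::real) ^ h x)"
proof -
  have u: "u i = card {x \<in> {1..n}. h x = i}" for i unfolding u_def bhs_of_def by simp
  show S: "{i. u i \<noteq> 0} = h ` {1..n}"
  proof
    show "{i. u i \<noteq> 0} \<subseteq> h ` {1..n}"
    proof
      fix i assume "i \<in> {i. u i \<noteq> 0}"
      then have "card {x \<in> {1..n}. h x = i} \<noteq> 0" by (simp add: u)
      then have "{x \<in> {1..n}. h x = i} \<noteq> {}" by auto
      then show "i \<in> h ` {1..n}" by blast
    qed
    show "h ` {1..n} \<subseteq> {i. u i \<noteq> 0}"
    proof
      fix i assume "i \<in> h ` {1..n}"
      then obtain x where "x \<in> {1..n}" "h x = i" by blast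
      then have "{x \<in> {1..n}. h x = i} \<noteq> {}" by blast
      then show "i \<in> {i. u i \<noteq> 0}" by (simp add: u)
    qed
  qed
  have "(\<Sum>x\<in>{1..n}. (1::nat)) = (\<Sum>i\<in>h ` {1..n}. \<Sum>x\<in>{x \<in> {1..n}. h x = i}. 1)"
    by (rule sum.image_gen) simp
  then show "(\<Sum>i\<in>{i. u i \<noteq> 0}. u i) = n" unfolding S by (simp add: u)
  have "(\<Sum>x\<in>{1..n}. (1/2::real) ^ h x) = (\<Sum>i\<in>h ` {1..n}. \<Sum>x\<in>{x \<in> {1..n}. h x = i}. (1/2::real) ^ h x)"
    by (rule sum.image_gen) simp
  also have "\<dots> = (\<Sum>i\<in>h ` {1..n}. real (u i) / 2 ^ i)"
  proof (rule sum.cong[OF refl])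
    fix i
    have "(\<Sum>x\<in>{x \<in> {1..n}. h x = i}. (1/2::real) ^ h x) = (\<Sum>x\<in>{x \<in> {1..n}. h x = i}. (1/2::real) ^ i)"
      by (rule sum.cong) auto
    also have "\<dots> = real (u i) / 2 ^ i" by (simp add: u power_one_over)
    finally show "(\<Sum>x\<in>{x \<in> {1..n}. h x = i}. (1/2::real) ^ h x) = real (u i) / 2 ^ i" .
  qed
  finally show "(\<Sum>i\<in>{i. u i \<noteq> 0}. real (u i) / 2 ^ i) = (\<Sum>x\<in>{1..n}. (1/2::real) ^ h x)"
    unfolding S by simp
qed

lemma bhs_of_bhs:
  assumes "level_fun n h"
  shows "bhs n (bhs_of (n, h))" and "n \<ge> 1"
proof -
  have "(\<Sum>x\<in>{1..n}. (1/2::real) ^ h x) = 1" using assms by (simp add: level_fun_def)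
  then show "bhs n (bhs_of (n, h))"
    unfolding bhs_def using fiber_sums[of n h] by simp
  show "n \<ge> 1"
  proof (rule ccontr)
    assume "\<not> n \<ge> 1" then have "n = 0" by simp
    then show False using assms by (simp add: level_fun_def)
  qed
qed

lemma LL_BHS: "p \<in> LL \<Longrightarrow> bhs_of p \<in> BHS"
proof -
  assume "p \<in> LL"
  then obtain n h where p: "p = (n, h)" "level_fun n h" unfolding LL_def by blast
  then show "bhs_of p \<in> BHS" unfolding BHS_def using bhs_of_bhs[OF p(2)] by blast
qed

lemma bhs_unique: "bhs n u \<Longrightarrow> bhs m u \<Longrightarrow> n = m"
  unfolding bhs_def by simp

lemma perm_exists:
  fixes h h' :: "nat \<Rightarrow> nat"
  assumes z: "\<And>x. x \<notin> {1..n} \<Longrightarrow> h x = 0" and z': "\<And>x. x \<notin> {1..n} \<Longrightarrow> h' x = 0"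
    and eq: "bhs_of (n, h) = bhs_of (n, h')"
  shows "\<exists>\<tau>. \<tau> permutes {1..n} \<and> h' = h \<circ> \<tau>"
proof -
  let ?A = "\<lambda>i. {x \<in> {1..n}. h x = i}" and ?B = "\<lambda>i. {x \<in> {1..n}. h' x = i}"
  have cd: "card (?B i) = card (?A i)" for i using fun_cong[OF eq, of i] by (simp add: bhs_of_def)
  have "\<forall>i. \<exists>g. bij_betw g (?B i) (?A i)"
    using finite_same_card_bij[OF _ _ cd] by auto
  from choice[OF this] obtain G where G: "\<And>i. bij_betw (G i) (?B i) (?A i)" by blast
  define \<tau> where "\<tau> x = (if x \<in> {1..n} then G (h' x) x else x)" for x
  have m: "\<tau> x \<in> {1..n} \<and> h (\<tau> x) = h' x" if "x \<in> {1..n}" for x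
  proof -
    have "x \<in> ?B (h' x)" using that by simp
    then have "G (h' x) x \<in> ?A (h' x)" using G bij_betwE by blast
    then show ?thesis using that by (simp add: \<tau>_def)
  qed
  have inj: "inj_on \<tau> {1..n}"
  proof (rule inj_onI)
    fix x y assume xy: "x \<in> {1..n}" "y \<in> {1..n}" "\<tau> x = \<tau> y"
    have hh: "h' x = h' y" using m[OF xy(1)] m[OF xy(2)] xy(3) by simp
    have "G (h' x) x = G (h' x) y" using xy hh by (simp add: \<tau>_def)
    moreover have "inj_on (G (h' x)) (?B (h' x))" using G bij_betw_def by blast
    ultimately show "x = y" using xy hh by (auto dest: inj_onD)
  qed
  have im: "\<tau> ` {1..n} = {1..n}"
    by (rule endo_inj_surj) (use m inj in auto)
  have per: "\<tau> permutes {1..n}"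
  proof (rule bij_imp_permutes)
    show "bij_betw \<tau> {1..n} {1..n}" using inj im by (simp add: bij_betw_def)
  qed (auto simp: \<tau>_def)
  have "h' = h \<circ> \<tau>"
  proof
    fix x show "h' x = (h \<circ> \<tau>) x"
    proof (cases "x \<in> {1..n}")
      case True then show ?thesis using m[OF True] by simp
    next
      case False
      then have "\<tau> x = x" unfolding \<tau>_def by auto
      then show ?thesis using z[OF False] z'[OF False] by simp
    qed
  qed
  then show ?thesis using per by blast
qed

lemma bhs_of_perm:
  assumes "\<sigma> permutes {1..n}"
  shows "bhs_of (n, perm_act \<sigma> h) = bhs_of (n, h)"
proof
  fix i
  let ?t = "inv \<sigma>"
  have t: "?t permutes {1..n}" using assms by (rule permutes_inv)
  have "?t ` {x \<in> {1..n}. h (?t x) = i} = {y \<in> {1..n}. h y = i}"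
  proof
    show "?t ` {x \<in> {1..n}. h (?t x) = i} \<subseteq> {y \<in> {1..n}. h y = i}"
      using permutes_in_image[OF t] by auto
    show "{y \<in> {1..n}. h y = i} \<subseteq> ?t ` {x \<in> {1..n}. h (?t x) = i}"
    proof
      fix y assume y: "y \<in> {y \<in> {1..n}. h y = i}"
      have "?t (\<sigma> y) = y" using permutes_inverses(2)[OF assms] by simp
      moreover have "\<sigma> y \<in> {1..n}" using y permutes_in_image[OF assms] by simp
      ultimately show "y \<in> ?t ` {x \<in> {1..n}. h (?t x) = i}" using y by (intro image_eqI[of _ _ "\<sigma> y"]) auto
    qed
  qed
  moreover have "inj_on ?t {x \<in> {1..n}. h (?t x) = i}"
    using permutes_inj[OF t] by (simp add: inj_on_def)
  ultimately have "card {x \<in> {1..n}. h (?t x) = i} = card {y \<in> {1..n}. h y = i}"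
    using card_image[of ?t "{x \<in> {1..n}. h (?t x) = i}"] by simp
  then show "bhs_of (n, perm_act \<sigma> h) i = bhs_of (n, h) i"
    by (simp add: bhs_of_def perm_act_def)
qed



lemma exists_fibers:
  assumes "finite S"
  shows "\<forall>(u::nat \<Rightarrow> nat) n. {i. u i \<noteq> 0} = S \<longrightarrow> (\<Sum>i\<in>S. u i) = n \<longrightarrow>
    (\<exists>h::nat \<Rightarrow> nat. (\<forall>x. x \<notin> {1..n} \<longrightarrow> h x = 0) \<and> (\<forall>i. card {x \<in> {1..n}. h x = i} = u i))"
  using assms
proof (induction S rule: finite_induct)
  case empty
  show ?case
  proof (intro allI impI)
    fix u :: "nat \<Rightarrow> nat" and n :: nat
    assume "{i. u i \<noteq> 0} = {}" "(\<Sum>i\<in>{}. u i) = n"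
    then have "\<forall>i. u i = 0" "n = 0" by auto
    then show "\<exists>h::nat \<Rightarrow> nat. (\<forall>x. x \<notin> {1..n} \<longrightarrow> h x = 0) \<and> (\<forall>i. card {x \<in> {1..n}. h x = i} = u i)"
      by (intro exI[of _ "\<lambda>_. 0"]) simp
  qed
next
  case (insert a F)
  show ?case
  proof (intro allI impI)
    fix u :: "nat \<Rightarrow> nat" and n :: nat
    assume su: "{i. u i \<noteq> 0} = insert a F" and sn: "(\<Sum>i\<in>insert a F. u i) = n"
    define u' where "u' = u(a := 0)"
    define n' where "n' = (\<Sum>i\<in>F. u' i)"
    have su': "{i. u' i \<noteq> 0} = F" using su insert.hyps(2) by (auto simp: u'_def)
    have n'eq: "n' = (\<Sum>i\<in>F. u i)" unfolding n'_def u'_def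
      using insert.hyps(2) by (intro sum.cong) auto
    have nn: "n = u a + n'" using sn insert.hyps by (simp add: n'eq)
    obtain h' where h'0: "\<forall>x. x \<notin> {1..n'} \<longrightarrow> h' x = 0"
      and h'c: "\<forall>i. card {x \<in> {1..n'}. h' x = i} = u' i"
      using insert.IH su' n'_def by blast
    define h where "h x = (if n' < x \<and> x \<le> n then a else h' x)" for x
    have "\<forall>x. x \<notin> {1..n} \<longrightarrow> h x = 0"
      using h'0 nn by (auto simp: h_def)
    moreover have "card {x \<in> {1..n}. h x = i} = u i" for i
    proof (cases "i = a")
      case True
      have e: "{x \<in> {1..n'}. h' x = a} = {}"
      proof -
        have "card {x \<in> {1..n'}. h' x = a} = 0" using h'c by (simp add: u'_def)
        then show ?thesis by simp
      qed
      have "{x \<in> {1..n}. h x = i} = {n'<..n}"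
      proof
        show "{x \<in> {1..n}. h x = i} \<subseteq> {n'<..n}"
        proof
          fix x assume x: "x \<in> {x \<in> {1..n}. h x = i}"
          show "x \<in> {n'<..n}"
          proof (rule ccontr)
            assume "x \<notin> {n'<..n}"
            then have "x \<le> n'" using x by auto
            then have "x \<in> {x \<in> {1..n'}. h' x = a}" using x True by (auto simp: h_def)
            then show False using e by blast
          qed
        qed
        show "{n'<..n} \<subseteq> {x \<in> {1..n}. h x = i}" using True by (auto simp: h_def)
      qed
      then show ?thesis using nn True by simp
    next
      case False
      have "{x \<in> {1..n}. h x = i} = {x \<in> {1..n'}. h' x = i}"
        using False nn h'0 by (auto simp: h_def)
      then show ?thesis using h'c False by (simp add: u'_def)
    qed
    ultimately show "\<exists>h::nat \<Rightarrow> nat. (\<forall>x. x \<notin> {1..n} \<longrightarrow> h x = 0) \<and> (\<forall>i. card {x \<in> {1..n}. h x = i} = u i)"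
      by blast
  qed
qed

lemma BHS_preimage:
  assumes "u \<in> BHS"
  shows "\<exists>p\<in>LL. bhs_of p = u"
proof -
  obtain n where b: "bhs n u" using assms unfolding BHS_def by blast
  then have fin: "finite {i. u i \<noteq> 0}" and s: "(\<Sum>i\<in>{i. u i \<noteq> 0}. u i) = n"
    and r: "(\<Sum>i\<in>{i. u i \<noteq> 0}. real (u i) / 2 ^ i) = 1"
    unfolding bhs_def by auto
  obtain h :: "nat \<Rightarrow> nat" where h0: "\<forall>x. x \<notin> {1..n} \<longrightarrow> h x = 0"
    and hc: "\<forall>i. card {x \<in> {1..n}. h x = i} = u i"
    using exists_fibers[OF fin] s by blast
  have bu: "bhs_of (n, h) = u" using hc by (simp add: bhs_of_def fun_eq_iff)
  have "(\<Sum>x\<in>{1..n}. (1/2::real) ^ h x) = 1"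
    using fiber_sums(3)[of n h] r bu by simp
  then have "level_fun n h" using h0 by (simp add: level_fun_def)
  then show ?thesis using bu unfolding LL_def by blast
qed

lemma coinv_span_push:
  "c \<in> coinv_span \<Longrightarrow> finite (supp c) \<and> push bhs_of c = (\<lambda>_. 0)"
proof (induction rule: coinv_span.induct)
  case zero
  show ?case by (simp add: supp_def push_def fun_eq_iff)
next
  case (step c n h \<sigma> a)
  have eq: "bhs_of (n, perm_act \<sigma> h) = bhs_of (n, h)" using bhs_of_perm[OF step.hyps(3)] .
  show ?case using push_step[OF conjunct1[OF step.IH] eq, of a] step.IH by simp
qed

lemma push_zero_coinv:
  fixes c :: "nat \<times> (nat \<Rightarrow> nat) \<Rightarrow> 'a::field"
  shows "finite (supp c) \<Longrightarrow> supp c \<subseteq> LL \<Longrightarrow> push bhs_of c = (\<lambda>_. 0) \<Longrightarrow> c \<in> coinv_span"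
proof (induction "card (supp c)" arbitrary: c rule: less_induct)
  case less
  show ?case
  proof (cases "supp c = {}")
    case True
    then have "c = (\<lambda>_. 0)" by (auto simp: supp_def fun_eq_iff)
    then show ?thesis using coinv_span.zero by simp
  next
    case False
    then obtain p where p: "p \<in> supp c" by blast
    have "\<exists>q\<in>supp c. q \<noteq> p \<and> bhs_of q = bhs_of p"
    proof (rule ccontr)
      assume "\<not> ?thesis"
      then have nq: "\<And>q. q \<in> supp c \<Longrightarrow> q \<noteq> p \<Longrightarrow> bhs_of q \<noteq> bhs_of p" by blast
      have "push bhs_of c (bhs_of p) = (\<Sum>q\<in>supp c. if q = p then c p else 0)"
        unfolding push_def using nq by (intro sum.cong refl) auto
      also have "\<dots> = c p" using less.prems(1) p by simp
      finally have "push bhs_of c (bhs_of p) = c p" .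
      moreover have "c p \<noteq> 0" using p by (simp add: supp_def)
      ultimately show False using less.prems(3) by (simp add: fun_eq_iff)
    qed
    then obtain q where q: "q \<in> supp c" "q \<noteq> p" "bhs_of q = bhs_of p" by blast
    define c' where "c' = (\<lambda>x. c x + c p * (delta q x - delta p x))"
    have ps: "push bhs_of c' = push bhs_of c" "finite (supp c')"
      using push_step[OF less.prems(1) q(3), of "c p"] unfolding c'_def by auto
    have sc': "supp c' \<subseteq> supp c - {p}"
      using q(1,2) by (auto simp: supp_def c'_def delta_def split: if_splits)
    then have lt: "card (supp c') < card (supp c)"
      using p less.prems(1) psubset_card_mono[of "supp c" "supp c'"] by blast
    have c'span: "c' \<in> coinv_span"
    proof (rule less.hyps[OF lt ps(2)])
      show "supp c' \<subseteq> LL" using sc' less.prems(2) by blast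
      show "push bhs_of c' = (\<lambda>_. 0)" using ps(1) less.prems(3) by simp
    qed
    obtain n hp where pp: "p = (n, hp)" by fastforce
    obtain m hq where qq: "q = (m, hq)" by fastforce
    have lp: "level_fun n hp" using p less.prems(2) pp unfolding LL_def by blast
    have lq: "level_fun m hq" using q(1) less.prems(2) qq unfolding LL_def by blast
    have "m = n"
      using bhs_unique[OF bhs_of_bhs(1)[OF lq]] bhs_of_bhs(1)[OF lp] q(3) pp qq by simp
    then obtain \<tau> where \<tau>: "\<tau> permutes {1..n}" "hp = hq \<circ> \<tau>"
      using perm_exists[of n hq hp] lp lq q(3) pp qq unfolding level_fun_def by auto
    define \<sigma> where "\<sigma> = inv \<tau>"
    have \<sigma>: "\<sigma> permutes {1..n}" unfolding \<sigma>_def by (rule permutes_inv[OF \<tau>(1)])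
    have "perm_act \<sigma> hq = hp"
      unfolding perm_act_def \<sigma>_def \<tau>(2) using inv_inv_eq[OF permutes_bij[OF \<tau>(1)]] by simp
    then have "(\<lambda>x. c' x + c p * (delta (n, perm_act \<sigma> hq) x - delta (n, hq) x)) \<in> coinv_span"
      using coinv_span.step[OF c'span lq[unfolded \<open>m = n\<close>] \<sigma>] by simp
    moreover have "(\<lambda>x. c' x + c p * (delta (n, perm_act \<sigma> hq) x - delta (n, hq) x)) = c"
      unfolding \<open>perm_act \<sigma> hq = hp\<close> c'_def using pp qq \<open>m = n\<close>
      by (simp add: fun_eq_iff algebra_simps)
    ultimately show ?thesis by simp
  qed
qed



lemma surj_part:
  fixes d :: "(nat \<Rightarrow> nat) \<Rightarrow> 'a::field"
  assumes "fin_supp_in BHS d"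
  shows "\<exists>c. fin_supp_in LL c \<and> push bhs_of c = d"
proof -
  have fd: "finite (supp d)" and sd: "supp d \<subseteq> BHS" using assms by (auto simp: fin_supp_in_def)
  have "\<forall>u\<in>BHS. \<exists>p. p \<in> LL \<and> bhs_of p = u" using BHS_preimage by blast
  from bchoice[OF this] obtain P where P: "\<And>u. u \<in> BHS \<Longrightarrow> P u \<in> LL \<and> bhs_of (P u) = u" by blast
  define c where "c q = (if q \<in> P ` supp d then d (bhs_of q) else 0)" for q
  have sc: "supp c = P ` supp d"
  proof
    show "supp c \<subseteq> P ` supp d" by (auto simp: supp_def c_def split: if_splits)
    show "P ` supp d \<subseteq> supp c"
    proof
      fix q assume "q \<in> P ` supp d"
      then obtain u where u: "u \<in> supp d" "q = P u" by blast
      then have "bhs_of q = u" using P sd by blast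
      then show "q \<in> supp c" using u by (auto simp: supp_def c_def)
    qed
  qed
  have inj: "inj_on P (supp d)"
    by (rule inj_on_inverseI[of _ bhs_of]) (use P sd in blast)
  have "fin_supp_in LL c" unfolding fin_supp_in_def sc using fd P sd by blast
  moreover have "push bhs_of c = d"
  proof
    fix y
    have "push bhs_of c y = (\<Sum>q\<in>P ` supp d. if bhs_of q = y then c q else 0)"
      unfolding push_def sc ..
    also have "\<dots> = (\<Sum>u\<in>supp d. if bhs_of (P u) = y then c (P u) else 0)"
      by (rule sum.reindex_cong[OF inj refl]) simp
    also have "\<dots> = (\<Sum>u\<in>supp d. if u = y then d y else 0)"
    proof (rule sum.cong[OF refl])
      fix u assume u: "u \<in> supp d"
      then have "bhs_of (P u) = u" using P sd by blast
      then show "(if bhs_of (P u) = y then c (P u) else 0) = (if u = y then d y else 0)"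
        using u by (auto simp: c_def)
    qed
    also have "\<dots> = d y" using fd by (simp add: supp_def)
    finally show "push bhs_of c y = d y" .
  qed
  ultimately show ?thesis by blast
qed

theorem proposition6p7:
  shows "(\<forall>p\<in>LL. bhs_of p \<in> BHS)
    \<and> (\<forall>d :: (nat \<Rightarrow> nat) \<Rightarrow> 'a::field. fin_supp_in BHS d \<longrightarrow>
          (\<exists>c. fin_supp_in LL c \<and> push bhs_of c = d))
    \<and> (\<forall>c :: nat \<times> (nat \<Rightarrow> nat) \<Rightarrow> 'a. fin_supp_in LL c \<longrightarrow>
          (push bhs_of c = (\<lambda>_. 0) \<longleftrightarrow> c \<in> coinv_span))
    \<and> (\<forall>c d :: nat \<times> (nat \<Rightarrow> nat) \<Rightarrow> 'a. fin_supp_in LL c \<longrightarrow> fin_supp_in LL d \<longrightarrow>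
          push bhs_of (fconv level_mul c d) = fconv bhs_mul (push bhs_of c) (push bhs_of d))"
proof (intro conjI allI impI ballI)
  fix p assume "p \<in> LL" then show "bhs_of p \<in> BHS" by (rule LL_BHS)
next
  fix d :: "(nat \<Rightarrow> nat) \<Rightarrow> 'a" assume "fin_supp_in BHS d"
  then show "\<exists>c. fin_supp_in LL c \<and> push bhs_of c = d" by (rule surj_part)
next
  fix c :: "nat \<times> (nat \<Rightarrow> nat) \<Rightarrow> 'a" assume c: "fin_supp_in LL c"
  show "push bhs_of c = (\<lambda>_. 0) \<longleftrightarrow> c \<in> coinv_span"
  proof
    assume "push bhs_of c = (\<lambda>_. 0)"
    then show "c \<in> coinv_span" using push_zero_coinv c by (auto simp: fin_supp_in_def)
  next
    assume "c \<in> coinv_span"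
    then show "push bhs_of c = (\<lambda>_. 0)" using coinv_span_push by blast
  qed
next
  fix c d :: "nat \<times> (nat \<Rightarrow> nat) \<Rightarrow> 'a"
  assume "fin_supp_in LL c" "fin_supp_in LL d"
  then show "push bhs_of (fconv level_mul c d) = fconv bhs_mul (push bhs_of c) (push bhs_of d)"
    by (intro push_fconv) (auto simp: fin_supp_in_def bhs_of_level_mul)
qed


end
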